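(* Let $\{\mu_t\}$ be a free convolution semigroup, let $p(x,t)$ be a martingale polynomial for $\{\mu_t\}$, and let $g(x,t)$ satisfy $\partial_xg(x,t)=p(x,t)$ (so $g(\cdot,t)$ is a polynomial). Let $\nu\in\mathcal M_0$. Then for all $s,t\ge0$, \[ \langle D_{\mu_s}C_t(\nu),\,g(\cdot,t+s)\rangle=\langle\nu,\,g(\cdot,s)\rangle . \]
   Context: $\mathcal M$ is the space of linear functionals on $\mathbb C[x]$ with the weak-$*$ topology (convergence of every moment $\langle\cdot,x^n\rangle$), $\mathcal M_1=\{\nu:\langle\nu,1\rangle=1\}$, $\mathcal M_0=\{\nu:\langle\nu,1\rangle=0\}$. For unital $\nu$: $G_\nu(z)=\sum\langle\nu,x^n\rangle z^{-(n+1)}$, $K_\nu$ its compositional inverse, $R_\nu=K_\nu-\frac1z$; free convolution $\boxplus$ on $\mathcal M_1$ is defined by $R_{\mu\boxplus\nu}=R_\mu+R_\nu$. $\mu$ is a freely infinitely divisible probability measure with all moments finite and $\{\mu_t\}$ the free convolution semigroup with $\mu_1=\mu$, $R_{\mu_t}=tR_\mu$. $C_t:\mathcal M_1\to\mathcal M_1$ is $C_t(\tau)=\mu_t\boxplus\tau$, and for $\tau\in\mathcal M_1,\nu\in\mathcal M_0$, $D_\tau C_t(\nu)=\lim_{\varepsilon\to0}\frac1\varepsilon(C_t(\tau+\varepsilon\nu)-C_t(\tau))\in\mathcal M_0$ (Gâteaux derivative in the weak-$*$ topology). Martingale polynomial: $p(x,t)$ polynomial in $x$ with $\mathcal K_{s,t}(p(\cdot,t))=p(\cdot,s)$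 for $s<t$, where $\mathcal K_{s,t}$ is the linear operator on $\mathbb C[x]$ determined coefficientwise (as formal series in $z^{-1}$) by $\mathcal K_{s,t}(\mathrm{Res}_z)=\mathrm{Res}_{F_{s,t}(z)}$, $\mathrm{Res}_z(x)=\frac1{z-x}$, $F_{s,t}=K_{\mu_s}\circ G_{\mu_t}$. *)

theory Defs
  imports "HOL-Probability.Probability" "HOL-Computational_Algebra.Polynomial"
    "HOL-Computational_Algebra.Formal_Power_Series"
begin

text \<open>A linear functional on C[x] is identified with its moment sequence
  n \<mapsto> <nu, x^n>.\<close>
type_synonym functional = "nat \<Rightarrow> complex"

definition unital :: "functional \<Rightarrow> bool" where
  "unital m \<longleftrightarrow> m 0 = 1"

definition centered :: "functional \<Rightarrow> bool" where
  "centered m \<longleftrightarrow> m 0 = 0"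

definition pair :: "functional \<Rightarrow> complex poly \<Rightarrow> complex" where
  "pair m q = (\<Sum>n\<le>degree q. coeff q n * m n)"

text \<open>Cauchy transform in the variable w = 1/z:
  G_nu(1/w) = sum_n m_n w^(n+1), a power series with constant term 0.\<close>
definition G_fps :: "functional \<Rightarrow> complex fps" where
  "G_fps m = Abs_fps (\<lambda>n. if n = 0 then 0 else m (n - 1))"

text \<open>K_nu is the compositional inverse of G_nu. In w: if h = fps_inv (G_fps m),
  then K_nu(w) = 1/h(w), and R_nu(w) = K_nu(w) - 1/w = (X/h - 1)/X.\<close>
definition R_fps :: "functional \<Rightarrow> complex fps" where
  "R_fps m = fps_shift 1 (inverse (fps_shift 1 (fps_inv (G_fps m))) - 1)"

definition free_conv :: "functional \<Rightarrow> functional \<Rightarrow> functional" where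
  "free_conv a b = (THE c. unital c \<and> R_fps c = R_fps a + R_fps b)"

definition free_semigroup :: "functional \<Rightarrow> real \<Rightarrow> functional" where
  "free_semigroup \<mu> t = (THE c. unital c \<and> R_fps c = fps_const (complex_of_real t) * R_fps \<mu>)"

definition Cmap :: "functional \<Rightarrow> real \<Rightarrow> functional \<Rightarrow> functional" where
  "Cmap \<mu> t \<tau> = free_conv (free_semigroup \<mu> t) \<tau>"

text \<open>D is the Gateaux derivative of C_t at tau in direction nu (weak-* topology,
  i.e. convergence of every moment).\<close>
definition has_gateaux_deriv ::
  "functional \<Rightarrow> real \<Rightarrow> functional \<Rightarrow> functional \<Rightarrow> functional \<Rightarrow> bool" where
  "has_gateaux_deriv \<mu> t \<tau> \<nu> D \<longleftrightarrow>
     (\<forall>n. ((\<lambda>\<epsilon>::real. (Cmap \<mu> t (\<lambda>k. \<tau> k + complex_of_real \<epsilon> * \<nu> k) n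
                          - Cmap \<mu> t \<tau> n) / complex_of_real \<epsilon>) \<longlongrightarrow> D n) (at 0))"

definition prob_moments :: "functional \<Rightarrow> bool" where
  "prob_moments m \<longleftrightarrow> (\<exists>M :: real measure. prob_space M \<and> sets M = sets borel \<and>
      (\<forall>k. integrable M (\<lambda>x. x ^ k)) \<and>
      (\<forall>k. m k = complex_of_real (\<integral>x. x ^ k \<partial>M)))"

definition freely_inf_div :: "functional \<Rightarrow> bool" where
  "freely_inf_div \<mu> \<longleftrightarrow> prob_moments \<mu> \<and>
     (\<forall>n::nat. n \<ge> 1 \<longrightarrow> (\<exists>\<nu>. prob_moments \<nu> \<and>
        fps_const (of_nat n) * R_fps \<nu> = R_fps \<mu>))"

definition lift_fps :: "complex fps \<Rightarrow> complex poly fps" where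
  "lift_fps f = Abs_fps (\<lambda>n. [: fps_nth f n :])"

text \<open>F_{s,t} = K_{mu_s} o G_{mu_t}. With w = 1/z and g = G_{mu_t}(1/w):
  F_{s,t}(1/w) = 1/g + R_{mu_s}(g), hence
  1/(F_{s,t}(z) - x) = g / (1 + g * (R_{mu_s} oo g) - x g).
  The series sum_n K_{s,t}(x^n) z^{-(n+1)} equals this, i.e. with
  c = sum_n K_{s,t}(x^n) w^n:  X * c * (1 + g (R_s oo g) - x g) = g.\<close>
definition kernel_coeffs :: "functional \<Rightarrow> real \<Rightarrow> real \<Rightarrow> complex poly fps" where
  "kernel_coeffs \<mu> s t =
     (let g = G_fps (free_semigroup \<mu> t);
          den = 1 + lift_fps (g * (R_fps (free_semigroup \<mu> s) oo g)) - fps_const [:0, 1:] * lift_fps g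
      in THE c. fps_X * c * den = lift_fps g)"

definition Kop :: "functional \<Rightarrow> real \<Rightarrow> real \<Rightarrow> complex poly \<Rightarrow> complex poly" where
  "Kop \<mu> s t q = (\<Sum>n\<le>degree q. smult (coeff q n) (fps_nth (kernel_coeffs \<mu> s t) n))"

definition martingale_poly :: "functional \<Rightarrow> (real \<Rightarrow> complex poly) \<Rightarrow> bool" where
  "martingale_poly \<mu> p \<longleftrightarrow> (\<forall>s t. 0 \<le> s \<and> s < t \<longrightarrow> Kop \<mu> s t (p t) = p s)"

end

theory Submission
  imports Defs
begin

unbundle no vec_syntax
notation fps_nth (infixl "$" 75)

lemma G_fps_nth: "G_fps m $ n = (if n = 0 then 0 else m (n - 1))"
  by (simp add: G_fps_def)

lemma G_fps_0[simp]: "G_fps m $ 0 = 0"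
  by (simp add: G_fps_def)

lemma G_fps_1[simp]: "unital m \<Longrightarrow> G_fps m $ Suc 0 = 1"
  by (simp add: G_fps_def unital_def)

lemma fps_inv_nth0[simp]: "fps_inv a $ 0 = 0"
  by (simp add: fps_inv_def)

lemma fps_inv_nth1: "a $ 0 = 0 \<Longrightarrow> fps_inv a $ Suc 0 = 1 / (a $ Suc 0)"
  by (simp add: fps_inv_def)

lemma X_shift1: "(f::'a::comm_ring_1 fps) $ 0 = 0 \<Longrightarrow> fps_X * fps_shift (Suc 0) f = f"
proof (rule fps_ext)
  fix n assume "f $ 0 = 0" then show "(fps_X * fps_shift (Suc 0) f) $ n = f $ n" by (cases n) simp_all
qed

lemma shift_X1: "fps_shift (Suc 0) (fps_X * (f::'a::comm_ring_1 fps)) = f"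
  by (rule fps_ext) simp

lemma fps_inv_right': "a $ 0 = 0 \<Longrightarrow> a $ Suc 0 \<noteq> 0 \<Longrightarrow> a oo fps_inv a = fps_X"
  using fps_inv_right[of a] by simp

lemma fps_inv': "a $ 0 = 0 \<Longrightarrow> a $ Suc 0 \<noteq> 0 \<Longrightarrow> fps_inv a oo a = fps_X"
  using fps_inv[of a] by simp

lemma fps_inv_inv:
  fixes a :: "'a::field fps"
  assumes "a $ 0 = 0" "a $ Suc 0 \<noteq> 0"
  shows "fps_inv (fps_inv a) = a"
proof -
  have i0: "fps_inv a $ 0 = 0" by simp
  have i1: "fps_inv a $ Suc 0 \<noteq> 0" using assms by (simp add: fps_inv_nth1)
  have e: "fps_inv (fps_inv a) oo fps_inv a = a oo fps_inv a"
    using fps_inv_right'[OF assms] fps_inv'[OF i0 i1] by simp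
  have i1': "fps_inv a $ 1 \<noteq> 0" using i1 by simp
  show ?thesis using e fps_compose_inj_right[OF i0 i1'] by blast
qed

definition Khat :: "functional \<Rightarrow> complex fps" where
  "Khat m = inverse (fps_shift 1 (fps_inv (G_fps m)))"

lemma h1: "unital m \<Longrightarrow> fps_inv (G_fps m) $ Suc 0 = 1"
  by (simp add: fps_inv_nth1)

lemma Khat0: "unital m \<Longrightarrow> Khat m $ 0 = 1"
  by (simp add: Khat_def h1)

lemma Khat_R: "unital m \<Longrightarrow> Khat m = 1 + fps_X * R_fps m"
proof -
  assume u: "unital m"
  have "(Khat m - 1) $ 0 = 0" using Khat0[OF u] by simp
  then have "fps_X * fps_shift (Suc 0) (Khat m - 1) = Khat m - 1" by (rule X_shift1)
  moreover have "R_fps m = fps_shift (Suc 0) (Khat m - 1)" by (simp add: R_fps_def Khat_def)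
  ultimately show ?thesis by (simp add: algebra_simps)
qed

lemma h_eq: "unital m \<Longrightarrow> fps_inv (G_fps m) = fps_X * inverse (Khat m)"
proof -
  assume u: "unital m"
  have "inverse (Khat m) = fps_shift 1 (fps_inv (G_fps m))"
    unfolding Khat_def by (rule fps_inverse_idempotent) (simp add: h1[OF u])
  then show ?thesis using X_shift1[of "fps_inv (G_fps m)"] by simp
qed

lemma R_inj:
  assumes ua: "unital a" and ub: "unital b" and eq: "R_fps a = R_fps b"
  shows "a = b"
proof -
  have "Khat a = Khat b" using Khat_R[OF ua] Khat_R[OF ub] eq by simp
  then have "fps_inv (G_fps a) = fps_inv (G_fps b)" using h_eq[OF ua] h_eq[OF ub] by simp
  then have "fps_inv (fps_inv (G_fps a)) = fps_inv (fps_inv (G_fps b))" by simp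
  then have "G_fps a = G_fps b"
    using fps_inv_inv[of "G_fps a"] fps_inv_inv[of "G_fps b"] ua ub by simp
  then have "\<forall>n. G_fps a $ Suc n = G_fps b $ Suc n" by simp
  then show ?thesis by (simp add: G_fps_nth fun_eq_iff)
qed

lemma R_surj: "\<exists>c. unital c \<and> R_fps c = r"
proof -
  define k where "k = 1 + fps_X * r"
  define hh where "hh = fps_X * inverse k"
  have k0: "k $ 0 = 1" by (simp add: k_def)
  have hh0: "hh $ 0 = 0" by (simp add: hh_def)
  have hh1: "hh $ Suc 0 = 1" by (simp add: hh_def k0)
  define Gc where "Gc = fps_inv hh"
  define c where "c = (\<lambda>n. Gc $ Suc n)"
  have Gc1: "Gc $ Suc 0 = 1" by (simp add: Gc_def fps_inv_nth1 hh0 hh1)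
  have G: "G_fps c = Gc"
    by (simp add: fps_eq_iff G_fps_nth c_def Gc_def)
  have u: "unital c" by (simp add: unital_def c_def Gc1)
  have "fps_inv (G_fps c) = hh" using G fps_inv_inv[OF hh0] hh1 by (simp add: Gc_def)
  then have "fps_shift 1 (fps_inv (G_fps c)) = inverse k"
    by (simp add: hh_def shift_X1)
  then have "inverse (fps_shift 1 (fps_inv (G_fps c))) = k"
    by (simp add: k0 fps_inverse_idempotent)
  then have "R_fps c = fps_shift 1 (fps_X * r)"
    by (simp add: R_fps_def k_def)
  also have "\<dots> = r" by (simp add: shift_X1)
  finally show ?thesis using u by blast
qed

lemma R_unique: "\<exists>!c. unital c \<and> R_fps c = r"
  using R_surj R_inj by blast

lemma free_conv_prop: "unital (free_conv a b) \<and> R_fps (free_conv a b) = R_fps a + R_fps b"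
  unfolding free_conv_def by (rule theI'[OF R_unique])

lemma free_semigroup_prop:
  "unital (free_semigroup \<mu> t) \<and> R_fps (free_semigroup \<mu> t) = fps_const (complex_of_real t) * R_fps \<mu>"
  unfolding free_semigroup_def by (rule theI'[OF R_unique])

lemma free_conv_eqI: "unital c \<Longrightarrow> R_fps c = R_fps a + R_fps b \<Longrightarrow> free_conv a b = c"
  using free_conv_prop R_inj by metis

lemma free_semigroup_eqI:
  "unital c \<Longrightarrow> R_fps c = fps_const (complex_of_real t) * R_fps \<mu> \<Longrightarrow> free_semigroup \<mu> t = c"
  using free_semigroup_prop R_inj by metis

lemma compose_X_inv:
  assumes Y0: "Y $ 0 = 0" and K0: "K $ 0 = (1::complex)"
  shows "(fps_X * inverse K) oo Y = Y * inverse (K oo Y)"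
proof -
  have "(fps_X * inverse K) oo Y = (fps_X oo Y) * (inverse K oo Y)"
    by (rule fps_compose_mult_distrib[OF Y0])
  also have "\<dots> = Y * inverse (K oo Y)"
    using Y0 K0 by (simp add: fps_inverse_compose)
  finally show ?thesis .
qed

lemma subord:
  assumes ua: "unital a" and ub: "unital b" and uc: "unital c"
    and R: "R_fps c = R_fps a + R_fps b"
  defines "Y \<equiv> G_fps c"
  shows "Y = G_fps b oo (Y * inverse (1 + Y * (R_fps b oo Y)))"
    and "Y * inverse (1 + Y * (R_fps b oo Y)) = fps_X * inverse (1 - fps_X * (R_fps a oo Y))"
    and "Y * inverse (1 + Y * (R_fps b oo Y)) = fps_inv (G_fps b) oo Y"
proof -
  have Y0: "Y $ 0 = 0" and Y1: "Y $ Suc 0 = 1" using uc by (simp_all add: Y_def)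
  define P where "P = 1 + Y * (R_fps b oo Y)"
  define Q where "Q = Y * (R_fps a oo Y)"
  have P0: "P $ 0 = 1" by (simp add: P_def Y0)
  have Q0: "Q $ 0 = 0" by (simp add: Q_def Y0)
  have Kc: "Khat c oo Y = P + Q"
    using Khat_R[OF uc] R Y0
    by (simp add: P_def Q_def fps_compose_add_distrib fps_compose_mult_distrib algebra_simps)
  have Kb: "Khat b oo Y = P"
    using Khat_R[OF ub] Y0
    by (simp add: P_def fps_compose_add_distrib fps_compose_mult_distrib algebra_simps)
  have "fps_inv (G_fps c) oo Y = fps_X"
    unfolding Y_def by (rule fps_inv') (simp_all add: uc)
  then have "Y * inverse (P + Q) = fps_X"
    using compose_X_inv[OF Y0 Khat0[OF uc]] h_eq[OF uc] Kc by simp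
  then have "Y * inverse (P + Q) * (P + Q) = fps_X * (P + Q)" by simp
  then have YPQ: "Y = fps_X * (P + Q)"
    using inverse_mult_eq_1[of "P + Q"] P0 Q0 by (simp add: mult.assoc)
  have hb: "fps_inv (G_fps b) oo Y = Y * inverse P"
    using compose_X_inv[OF Y0 Khat0[OF ub]] h_eq[OF ub] Kb by simp
  then show "Y * inverse (1 + Y * (R_fps b oo Y)) = fps_inv (G_fps b) oo Y"
    by (simp add: P_def)
  have "G_fps b oo (fps_inv (G_fps b) oo Y) = (G_fps b oo fps_inv (G_fps b)) oo Y"
    by (rule fps_compose_assoc[OF Y0]) simp
  also have "\<dots> = Y" using fps_inv_right'[of "G_fps b"] ub Y0 by simp
  finally show "Y = G_fps b oo (Y * inverse (1 + Y * (R_fps b oo Y)))"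
    using hb by (simp add: P_def)
  define F where "F = 1 - fps_X * (R_fps a oo Y)"
  have F0: "F $ 0 = 1" by (simp add: F_def)
  have "Y * F = fps_X * P"
    using YPQ by (simp add: F_def Q_def algebra_simps)
  then have "Y * F * inverse P = fps_X * (P * inverse P)" by (simp add: mult.assoc)
  then have e1: "F * (Y * inverse P) = fps_X"
    using inverse_mult_eq_1'[of P] P0 by (simp add: algebra_simps)
  have "Y * inverse P = (inverse F * F) * (Y * inverse P)"
    using inverse_mult_eq_1[of F] F0 by simp
  also have "\<dots> = inverse F * fps_X" by (simp add: mult.assoc e1)
  finally have "Y * inverse P = fps_X * inverse F" by (simp add: mult.commute)
  then show "Y * inverse (1 + Y * (R_fps b oo Y)) = fps_X * inverse (1 - fps_X * (R_fps a oo Y))"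
    by (simp add: P_def F_def)
qed


definition hasd :: "(real \<Rightarrow> complex fps) \<Rightarrow> complex fps \<Rightarrow> bool" where
  "hasd F F' \<longleftrightarrow> (\<forall>n. ((\<lambda>e. F e $ n) has_vector_derivative F' $ n) (at 0))"

lemma hasd_unique:
  assumes "hasd F A" "hasd F B" shows "A = B"
proof (rule fps_ext)
  fix n
  from assms have "((\<lambda>e. F e $ n) has_vector_derivative A $ n) (at 0)"
    "((\<lambda>e. F e $ n) has_vector_derivative B $ n) (at 0)" by (simp_all add: hasd_def)
  then show "A $ n = B $ n" by (rule vector_derivative_unique_at)
qed

lemma hasd_cong: "hasd F A \<Longrightarrow> (\<And>e. F e = G e) \<Longrightarrow> A = B \<Longrightarrow> hasd G B"
proof -
  assume "hasd F A" "\<And>e. F e = G e" "A = B"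
  moreover have "F = G" using \<open>\<And>e. F e = G e\<close> by blast
  ultimately show ?thesis by simp
qed

lemma hasd_const: "hasd (\<lambda>e. A) 0"
  by (simp add: hasd_def)

lemma hasd_ofreal: "hasd (\<lambda>e. fps_const (complex_of_real e)) 1"
  unfolding hasd_def
proof
  fix n
  show "((\<lambda>e. fps_const (complex_of_real e) $ n) has_vector_derivative 1 $ n) (at 0)"
  proof (cases "n = 0")
    case True
    then show ?thesis using has_vector_derivative_of_real[OF DERIV_ident, of "at 0"] by simp
  next
    case False
    then show ?thesis by simp
  qed
qed

lemma hasd_add: "hasd F A \<Longrightarrow> hasd G B \<Longrightarrow> hasd (\<lambda>e. F e + G e) (A + B)"
  by (simp add: hasd_def has_vector_derivative_add)

lemma hasd_diff: "hasd F A \<Longrightarrow> hasd G B \<Longrightarrow> hasd (\<lambda>e. F e - G e) (A - B)"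
  by (simp add: hasd_def has_vector_derivative_diff)

lemma hasd_mult:
  assumes "hasd F A" "hasd G B"
  shows "hasd (\<lambda>e. F e * G e) (F 0 * B + A * G 0)"
  unfolding hasd_def
proof
  fix n
  have eq: "(\<lambda>e. (F e * G e) $ n) = (\<lambda>e. \<Sum>i=0..n. F e $ i * G e $ (n - i))"
    by (simp add: fps_mult_nth)
  have d: "((\<lambda>e. \<Sum>i=0..n. F e $ i * G e $ (n - i)) has_vector_derivative
      (\<Sum>i=0..n. F 0 $ i * B $ (n - i) + A $ i * G 0 $ (n - i))) (at 0)"
    by (intro has_vector_derivative_sum has_vector_derivative_mult)
       (use assms in \<open>auto simp: hasd_def\<close>)
  have v: "(F 0 * B + A * G 0) $ n = (\<Sum>i=0..n. F 0 $ i * B $ (n - i) + A $ i * G 0 $ (n - i))"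
    by (simp add: fps_mult_nth sum.distrib)
  show "((\<lambda>e. (F e * G e) $ n) has_vector_derivative (F 0 * B + A * G 0) $ n) (at 0)"
    using d unfolding eq v .
qed

lemma hasd_cmult: "hasd F A \<Longrightarrow> hasd (\<lambda>e. C * F e) (C * A)"
  using hasd_mult[OF hasd_const[of C]] by simp

lemma hasd_sum:
  assumes "\<And>i. i \<in> I \<Longrightarrow> hasd (F i) (A i)"
  shows "hasd (\<lambda>e. \<Sum>i\<in>I. F i e) (\<Sum>i\<in>I. A i)"
  unfolding hasd_def
proof
  fix n
  have "((\<lambda>e. \<Sum>i\<in>I. F i e $ n) has_vector_derivative (\<Sum>i\<in>I. A i $ n)) (at 0)"
    by (intro has_vector_derivative_sum) (use assms in \<open>auto simp: hasd_def\<close>)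
  then show "((\<lambda>e. (\<Sum>i\<in>I. F i e) $ n) has_vector_derivative (\<Sum>i\<in>I. A i) $ n) (at 0)"
    by (simp add: fps_sum_nth)
qed

lemma hasd_power:
  assumes "hasd F A"
  shows "hasd (\<lambda>e. F e ^ k) (of_nat k * F 0 ^ (k - 1) * A)"
proof (induction k)
  case 0
  then show ?case using hasd_const[of 1] by simp
next
  case (Suc k)
  have "hasd (\<lambda>e. F e * F e ^ k) (F 0 * (of_nat k * F 0 ^ (k - 1) * A) + A * F 0 ^ k)"
    by (rule hasd_mult[OF assms Suc])
  moreover have "F 0 * (of_nat k * F 0 ^ (k - 1) * A) + A * F 0 ^ k = of_nat (Suc k) * F 0 ^ (Suc k - 1) * A"
    by (cases k) (simp_all add: algebra_simps)
  ultimately show ?case by simp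
qed

lemma hasd_compose_left:
  assumes "hasd F A"
  shows "hasd (\<lambda>e. F e oo B) (A oo B)"
  unfolding hasd_def
proof
  fix n
  have "((\<lambda>e. \<Sum>i=0..n. F e $ i * (B ^ i) $ n) has_vector_derivative (\<Sum>i=0..n. A $ i * (B ^ i) $ n)) (at 0)"
    by (intro has_vector_derivative_sum has_vector_derivative_mult_left) (use assms in \<open>auto simp: hasd_def\<close>)
  then show "((\<lambda>e. (F e oo B) $ n) has_vector_derivative (A oo B) $ n) (at 0)"
    by (simp add: fps_compose_nth)
qed

lemma hasd_nth0_zero:
  assumes "hasd F A" "\<And>e. F e $ 0 = 0"
  shows "A $ 0 = 0"
proof -
  have "((\<lambda>e. F e $ 0) has_vector_derivative A $ 0) (at 0)" using assms(1) by (simp add: hasd_def)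
  moreover have "((\<lambda>e. F e $ 0) has_vector_derivative 0) (at 0)" using assms(2) by simp
  ultimately show ?thesis using vector_derivative_unique_at by blast
qed

lemma of_nat_mult_nth: "(of_nat i * (f::'a::comm_ring_1 fps)) $ k = of_nat i * f $ k"
  by (induction i) (simp_all add: algebra_simps)

lemma mult_nth_agree:
  fixes U V B :: "'a::comm_ring_1 fps"
  assumes "B $ 0 = 0" "\<And>k. k < n \<Longrightarrow> U $ k = V $ k"
  shows "(U * B) $ n = (V * B) $ n"
  unfolding fps_mult_nth
proof (rule sum.cong[OF refl])
  fix i assume "i \<in> {0..n}"
  then have "i < n \<or> i = n" by auto
  then show "U $ i * B $ (n - i) = V $ i * B $ (n - i)"
    using assms by auto
qed

lemma deriv_compose_agree:
  fixes A B :: "'a::idom fps"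
  assumes B0: "B $ 0 = 0" and k: "k < n"
  shows "(\<Sum>i=0..n. A $ i * (of_nat i * B ^ (i - 1)) $ k) = (fps_deriv A oo B) $ k"
proof -
  obtain m where n: "n = Suc m" using k by (cases n) auto
  have "(\<Sum>i=0..n. A $ i * (of_nat i * B ^ (i - 1)) $ k)
      = (\<Sum>i=0..n. of_nat i * A $ i * (B ^ (i - 1)) $ k)"
    by (intro sum.cong refl) (simp only: of_nat_mult_nth mult_ac)
  also have "\<dots> = (\<Sum>j=0..m. of_nat (j + 1) * A $ (j + 1) * (B ^ j) $ k)"
    unfolding n by (subst sum.atLeast0_atMost_Suc_shift) simp
  also have "\<dots> = (\<Sum>j=0..k. of_nat (j + 1) * A $ (j + 1) * (B ^ j) $ k)"
  proof (rule sum.mono_neutral_right)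
    show "\<forall>i\<in>{0..m} - {0..k}. of_nat (i + 1) * A $ (i + 1) * (B ^ i) $ k = 0"
      using startsby_zero_power_prefix[OF B0] by auto
  qed (use k n in auto)
  also have "\<dots> = (fps_deriv A oo B) $ k"
    by (simp add: fps_compose_nth)
  finally show ?thesis .
qed

lemma hasd_compose_right:
  assumes d: "hasd B B'" and B0: "\<And>e. B e $ 0 = 0"
  shows "hasd (\<lambda>e. A oo B e) ((fps_deriv A oo B 0) * B')"
  unfolding hasd_def
proof
  fix n
  have B'0: "B' $ 0 = 0" by (rule hasd_nth0_zero[OF d B0])
  have B00: "B 0 $ 0 = 0" using B0 by simp
  have hp: "((\<lambda>e. (B e ^ i) $ n) has_vector_derivative (of_nat i * B 0 ^ (i - 1) * B') $ n) (at 0)" for i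
    using hasd_power[OF d, of i] unfolding hasd_def by blast
  have d1: "((\<lambda>e. \<Sum>i=0..n. A $ i * (B e ^ i) $ n) has_vector_derivative
        (\<Sum>i=0..n. A $ i * (of_nat i * B 0 ^ (i - 1) * B') $ n)) (at 0)"
    by (intro has_vector_derivative_sum has_vector_derivative_mult_right hp)
  have v1: "(\<Sum>i=0..n. A $ i * (of_nat i * B 0 ^ (i - 1) * B') $ n)
      = ((\<Sum>i=0..n. fps_const (A $ i) * (of_nat i * B 0 ^ (i - 1))) * B') $ n"
    by (simp only: sum_distrib_right fps_sum_nth mult.assoc fps_mult_left_const_nth)
  have v2: "((\<Sum>i=0..n. fps_const (A $ i) * (of_nat i * B 0 ^ (i - 1))) * B') $ n
      = ((fps_deriv A oo B 0) * B') $ n"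
  proof (rule mult_nth_agree[OF B'0])
    fix k assume k: "k < n"
    have "(\<Sum>i=0..n. fps_const (A $ i) * (of_nat i * B 0 ^ (i - 1))) $ k
        = (\<Sum>i=0..n. A $ i * (of_nat i * B 0 ^ (i - 1)) $ k)"
      by (simp only: fps_sum_nth fps_mult_left_const_nth)
    also have "\<dots> = (fps_deriv A oo B 0) $ k"
      by (rule deriv_compose_agree[OF B00 k])
    finally show "(\<Sum>i=0..n. fps_const (A $ i) * (of_nat i * B 0 ^ (i - 1))) $ k = (fps_deriv A oo B 0) $ k" .
  qed
  have eq: "(\<lambda>e. (A oo B e) $ n) = (\<lambda>e. \<Sum>i=0..n. A $ i * (B e ^ i) $ n)"
    by (simp add: fps_compose_nth)
  show "((\<lambda>e. (A oo B e) $ n) has_vector_derivative ((fps_deriv A oo B 0) * B') $ n) (at 0)"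
    using d1 unfolding eq v1 v2 .
qed

lemma geo_inverse:
  fixes H :: "complex fps"
  assumes H0: "H $ 0 = 0"
  shows "inverse (1 - H) $ n = (\<Sum>k<Suc n. H ^ k) $ n"
proof -
  have u: "inverse (1 - H) * (1 - H) = 1" using H0 by (intro inverse_mult_eq_1) simp
  have "(\<Sum>k<Suc n. H ^ k) = inverse (1 - H) * (1 - H) * (\<Sum>k<Suc n. H ^ k)" using u by simp
  also have "\<dots> = inverse (1 - H) * (1 - H ^ Suc n)"
    by (simp only: mult.assoc one_diff_power_eq)
  also have "\<dots> = inverse (1 - H) - inverse (1 - H) * H ^ Suc n" by (simp add: algebra_simps)
  finally have e: "(\<Sum>k<Suc n. H ^ k) = inverse (1 - H) - inverse (1 - H) * H ^ Suc n" .
  have "(inverse (1 - H) * H ^ Suc n) $ n = 0"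
    unfolding fps_mult_nth using startsby_zero_power_prefix[OF H0, of "Suc n"]
    by (intro sum.neutral) auto
  then show ?thesis using e by simp
qed

lemma hasd_inverse:
  assumes d: "hasd F A" and F0: "\<And>e. F e $ 0 = 1"
  shows "hasd (\<lambda>e. inverse (F e)) (- (A * inverse (F 0) ^ 2))"
proof -
  have diff: "(\<lambda>e. inverse (F e) $ n) differentiable (at 0)" for n
  proof -
    have H0: "(1 - F e) $ 0 = 0" for e using F0 by simp
    have eq: "(\<lambda>e. inverse (F e) $ n) = (\<lambda>e. (\<Sum>k<Suc n. (1 - F e) ^ k) $ n)"
      using geo_inverse[OF H0] by (simp add: fun_eq_iff)
    have h1: "hasd (\<lambda>e. 1 - F e) (0 - A)" by (rule hasd_diff[OF hasd_const d])
    have "hasd (\<lambda>e. \<Sum>k<Suc n. (1 - F e) ^ k) (\<Sum>k<Suc n. of_nat k * (1 - F 0) ^ (k - 1) * (0 - A))"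
      by (intro hasd_sum hasd_power[OF h1])
    then show ?thesis unfolding eq hasd_def by (blast intro: differentiableI_vector)
  qed
  define I' where "I' = Abs_fps (\<lambda>n. vector_derivative (\<lambda>e. inverse (F e) $ n) (at 0))"
  have dI: "hasd (\<lambda>e. inverse (F e)) I'"
    unfolding hasd_def I'_def using diff[THEN iffD1[OF vector_derivative_works]] by simp
  have "hasd (\<lambda>e. F e * inverse (F e)) (F 0 * I' + A * inverse (F 0))"
    by (rule hasd_mult[OF d dI])
  moreover have "hasd (\<lambda>e. F e * inverse (F e)) 0"
  proof (rule hasd_cong[OF hasd_const[of 1]])
    fix e
    have "F e $ 0 \<noteq> 0" using F0[of e] by simp
    then show "1 = F e * inverse (F e)" by (simp add: inverse_mult_eq_1')
  qed simp
  ultimately have z: "F 0 * I' + A * inverse (F 0) = 0" by (rule hasd_unique)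
  have "I' = inverse (F 0) * (F 0 * I')"
    using inverse_mult_eq_1[of "F 0"] F0 by (simp add: mult.assoc[symmetric])
  also have "\<dots> = inverse (F 0) * (- (A * inverse (F 0)))"
  proof -
    have "F 0 * I' = - (A * inverse (F 0))" using z by (simp add: eq_neg_iff_add_eq_0)
    then show ?thesis by simp
  qed
  also have "\<dots> = - (A * inverse (F 0) ^ 2)"
    by (simp add: power2_eq_square)
  finally show ?thesis using dI by simp
qed


definition agree :: "nat \<Rightarrow> complex fps \<Rightarrow> complex fps \<Rightarrow> bool" where
  "agree n a b \<longleftrightarrow> (\<forall>k<n. a $ k = b $ k)"

lemma agree_refl: "agree n a a" by (simp add: agree_def)

lemma agree_mono: "agree n a b \<Longrightarrow> m \<le> n \<Longrightarrow> agree m a b"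
  by (simp add: agree_def)

lemma agree_add: "agree n a a' \<Longrightarrow> agree n b b' \<Longrightarrow> agree n (a + b) (a' + b')"
  by (simp add: agree_def)

lemma agree_diff: "agree n a a' \<Longrightarrow> agree n b b' \<Longrightarrow> agree n (a - b) (a' - b')"
  by (simp add: agree_def)

lemma agree_mult:
  assumes "agree n a a'" "agree n b b'"
  shows "agree n (a * b) (a' * b')"
  unfolding agree_def
proof (intro allI impI)
  fix k assume k: "k < n"
  show "(a * b) $ k = (a' * b') $ k"
    unfolding fps_mult_nth
    by (rule sum.cong[OF refl]) (use assms k in \<open>auto simp: agree_def\<close>)
qed

lemma agree_power: "agree n a a' \<Longrightarrow> agree n (a ^ i) (a' ^ i)"
  by (induction i) (simp_all add: agree_refl agree_mult)

lemma agree_compose: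
  assumes "agree n a a'" "agree n b b'"
  shows "agree n (a oo b) (a' oo b')"
  unfolding agree_def
proof (intro allI impI)
  fix k assume k: "k < n"
  have p: "(b ^ i) $ k = (b' ^ i) $ k" for i
    using agree_power[OF assms(2), of i] k by (simp add: agree_def)
  show "(a oo b) $ k = (a' oo b') $ k"
    unfolding fps_compose_nth
    by (rule sum.cong[OF refl]) (use assms(1) k p in \<open>auto simp: agree_def\<close>)
qed

lemma agree_X: "agree n a b \<Longrightarrow> agree (Suc n) (fps_X * a) (fps_X * b)"
  by (auto simp: agree_def)

lemma agree_inverse:
  assumes ab: "agree n a b" and a0: "a $ 0 \<noteq> 0"
  shows "agree n (inverse a) (inverse b)"
proof (cases "n = 0")
  case True
  then show ?thesis by (simp add: agree_def)
next
  case False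
  then have b0: "b $ 0 \<noteq> 0" using ab a0 by (simp add: agree_def)
  have "fps_cutoff n a = fps_cutoff n b"
    using ab by (simp add: agree_def fps_cutoff_eq_fps_cutoff_iff)
  then have "fps_cutoff n (inverse a) = fps_cutoff n (inverse b)"
    using fps_cutoff_inverse[OF a0, of n] fps_cutoff_inverse[OF b0, of n] by simp
  then show ?thesis by (simp add: agree_def fps_cutoff_eq_fps_cutoff_iff)
qed

definition Om :: "complex fps \<Rightarrow> complex fps \<Rightarrow> complex fps" where
  "Om r Y = fps_X * inverse (1 - fps_X * (r oo Y))"

lemma Om0[simp]: "Om r Y $ 0 = 0"
  by (simp add: Om_def)

lemma agree_Om: "agree n Y Y' \<Longrightarrow> agree (Suc n) (Om r Y) (Om r Y')"
proof -
  assume a: "agree n Y Y'"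
  have "agree (Suc n) (1 - fps_X * (r oo Y)) (1 - fps_X * (r oo Y'))"
    by (intro agree_diff agree_refl agree_X agree_compose a)
  then have "agree (Suc n) (inverse (1 - fps_X * (r oo Y))) (inverse (1 - fps_X * (r oo Y')))"
    by (rule agree_inverse) simp
  then have "agree (Suc (Suc n)) (Om r Y) (Om r Y')"
    unfolding Om_def by (rule agree_X)
  then show ?thesis by (rule agree_mono) simp
qed

definition Phi :: "complex fps \<Rightarrow> complex fps \<Rightarrow> complex fps \<Rightarrow> real \<Rightarrow> complex fps \<Rightarrow> complex fps" where
  "Phi A0 A1 r e Y = (A0 + fps_const (complex_of_real e) * A1) oo Om r Y"

lemma agree_Phi: "agree n Y Y' \<Longrightarrow> Phi A0 A1 r e Y $ n = Phi A0 A1 r e Y' $ n"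
proof -
  assume "agree n Y Y'"
  then have "agree (Suc n) (Phi A0 A1 r e Y) (Phi A0 A1 r e Y')"
    unfolding Phi_def by (intro agree_compose agree_refl agree_Om)
  then show ?thesis by (simp add: agree_def)
qed

lemma hasd_Om:
  assumes d: "hasd Y Y'" and Y0: "\<And>e. Y e $ 0 = 0"
  shows "hasd (\<lambda>e. Om r (Y e)) (Om r (Y 0) ^ 2 * ((fps_deriv r oo Y 0) * Y'))"
proof -
  define W' where "W' = (fps_deriv r oo Y 0) * Y'"
  define F0 where "F0 = 1 - fps_X * (r oo Y 0)"
  have hW: "hasd (\<lambda>e. r oo Y e) W'"
    unfolding W'_def by (rule hasd_compose_right[OF d Y0])
  have hF: "hasd (\<lambda>e. 1 - fps_X * (r oo Y e)) (0 - fps_X * W')"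
    by (rule hasd_diff[OF hasd_const hasd_cmult[OF hW]])
  have hI: "hasd (\<lambda>e. inverse (1 - fps_X * (r oo Y e))) (- ((0 - fps_X * W') * inverse F0 ^ 2))"
    unfolding F0_def by (rule hasd_inverse[OF hF]) simp
  have h: "hasd (\<lambda>e. Om r (Y e)) (fps_X * (- ((0 - fps_X * W') * inverse F0 ^ 2)))"
    unfolding Om_def by (rule hasd_cmult[OF hI])
  have eq: "fps_X * (- ((0 - fps_X * W') * inverse F0 ^ 2)) = Om r (Y 0) ^ 2 * W'"
    by (simp add: Om_def F0_def power2_eq_square algebra_simps)
  from h have "hasd (\<lambda>e. Om r (Y e)) (Om r (Y 0) ^ 2 * W')" by (simp only: eq)
  then show ?thesis by (simp only: W'_def)
qed

lemma hasd_Phi: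
  assumes d: "hasd Y Y'" and Y0: "\<And>e. Y e $ 0 = 0"
  shows "hasd (\<lambda>e. Phi A0 A1 r e (Y e))
     ((A1 oo Om r (Y 0)) + (fps_deriv A0 oo Om r (Y 0)) * (Om r (Y 0) ^ 2 * ((fps_deriv r oo Y 0) * Y')))"
proof -
  have hO: "hasd (\<lambda>e. Om r (Y e)) (Om r (Y 0) ^ 2 * ((fps_deriv r oo Y 0) * Y'))"
    by (rule hasd_Om[OF d Y0])
  have O0: "\<And>e. Om r (Y e) $ 0 = 0" by simp
  have h1: "hasd (\<lambda>e. A0 oo Om r (Y e)) ((fps_deriv A0 oo Om r (Y 0)) * (Om r (Y 0) ^ 2 * ((fps_deriv r oo Y 0) * Y')))"
    by (rule hasd_compose_right[OF hO O0])
  have h2: "hasd (\<lambda>e. A1 oo Om r (Y e)) ((fps_deriv A1 oo Om r (Y 0)) * (Om r (Y 0) ^ 2 * ((fps_deriv r oo Y 0) * Y')))"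
    by (rule hasd_compose_right[OF hO O0])
  have h3: "hasd (\<lambda>e. fps_const (complex_of_real e) * (A1 oo Om r (Y e)))
     (fps_const (complex_of_real 0) * ((fps_deriv A1 oo Om r (Y 0)) * (Om r (Y 0) ^ 2 * ((fps_deriv r oo Y 0) * Y'))) + 1 * (A1 oo Om r (Y 0)))"
    by (rule hasd_mult[OF hasd_ofreal h2])
  have h4: "hasd (\<lambda>e. (A0 oo Om r (Y e)) + fps_const (complex_of_real e) * (A1 oo Om r (Y e)))
     ((fps_deriv A0 oo Om r (Y 0)) * (Om r (Y 0) ^ 2 * ((fps_deriv r oo Y 0) * Y')) +
      (A1 oo Om r (Y 0)))"
    using hasd_add[OF h1 h3] by simp
  show ?thesis
  proof (rule hasd_cong[OF h4])
    fix e
    show "(A0 oo Om r (Y e)) + fps_const (complex_of_real e) * (A1 oo Om r (Y e)) = Phi A0 A1 r e (Y e)"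
      by (simp add: Phi_def fps_compose_add_distrib fps_const_mult_apply_left)
  qed (simp add: algebra_simps)
qed

lemma fixpoint_hasd:
  assumes fx: "\<And>e. g e = Phi A0 A1 r e (g e)" and g0: "\<And>e. g e $ 0 = 0"
  shows "\<exists>\<delta>. hasd g \<delta>"
proof -
  have "\<forall>k<n. (\<lambda>e. g e $ k) differentiable (at 0)" for n
  proof (induction n)
    case 0
    then show ?case by simp
  next
    case (Suc n)
    define cut where "cut = (\<lambda>e. fps_cutoff n (g e))"
    define C where "C = Abs_fps (\<lambda>k. if k < n then vector_derivative (\<lambda>e. g e $ k) (at 0) else 0)"
    have hc: "hasd cut C"
      unfolding hasd_def
    proof
      fix k
      show "((\<lambda>e. cut e $ k) has_vector_derivative C $ k) (at 0)"
      proof (cases "k < n")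
        case True
        then show ?thesis using Suc.IH[rule_format, OF True, THEN iffD1[OF vector_derivative_works]]
          by (simp add: cut_def C_def)
      next
        case False
        then show ?thesis by (simp add: cut_def C_def)
      qed
    qed
    have c0: "\<And>e. cut e $ 0 = 0" using g0 by (simp add: cut_def)
    have "hasd (\<lambda>e. Phi A0 A1 r e (cut e))
       ((A1 oo Om r (cut 0)) + (fps_deriv A0 oo Om r (cut 0)) * (Om r (cut 0) ^ 2 * ((fps_deriv r oo cut 0) * C)))"
      by (rule hasd_Phi[OF hc c0])
    then have dd: "(\<lambda>e. Phi A0 A1 r e (cut e) $ n) differentiable (at 0)"
      unfolding hasd_def by (blast intro: differentiableI_vector)
    have "Phi A0 A1 r e (cut e) $ n = g e $ n" for e
    proof -
      have "agree n (cut e) (g e)" by (simp add: agree_def cut_def)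
      then have "Phi A0 A1 r e (cut e) $ n = Phi A0 A1 r e (g e) $ n" by (rule agree_Phi)
      then show ?thesis using fx[of e] by simp
    qed
    then have "(\<lambda>e. g e $ n) differentiable (at 0)" using dd by simp
    then show ?case using Suc.IH less_Suc_eq by auto
  qed
  then have dk: "(\<lambda>e. g e $ k) differentiable (at 0)" for k by blast
  have "hasd g (Abs_fps (\<lambda>k. vector_derivative (\<lambda>e. g e $ k) (at 0)))"
    unfolding hasd_def using dk[THEN iffD1[OF vector_derivative_works]] by simp
  then show ?thesis by blast
qed

lemma delta_eq:
  assumes fx: "\<And>e. g e = Phi A0 A1 r e (g e)" and g0: "\<And>e. g e $ 0 = 0" and d: "hasd g \<delta>"
  shows "\<delta> = (A1 oo Om r (g 0)) + (fps_deriv A0 oo Om r (g 0)) * (Om r (g 0) ^ 2 * ((fps_deriv r oo g 0) * \<delta>))"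
proof -
  have "hasd (\<lambda>e. Phi A0 A1 r e (g e))
     ((A1 oo Om r (g 0)) + (fps_deriv A0 oo Om r (g 0)) * (Om r (g 0) ^ 2 * ((fps_deriv r oo g 0) * \<delta>)))"
    by (rule hasd_Phi[OF d g0])
  moreover have "(\<lambda>e. Phi A0 A1 r e (g e)) = g" using fx by (simp add: fun_eq_iff)
  ultimately have "hasd g ((A1 oo Om r (g 0)) + (fps_deriv A0 oo Om r (g 0)) * (Om r (g 0) ^ 2 * ((fps_deriv r oo g 0) * \<delta>)))"
    by simp
  then show ?thesis using d by (rule hasd_unique[rotated])
qed

lemma final_alg:
  fixes r g0 A0 A1 Nd \<delta> :: "complex fps"
  assumes g0: "g0 = A0 oo Om r g0" and A00: "A0 $ 0 = 0"
    and dl: "\<delta> = (A1 oo Om r g0) + (fps_deriv A0 oo Om r g0) * (Om r g0 ^ 2 * ((fps_deriv r oo g0) * \<delta>))"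
    and A1: "A1 = fps_X ^ 2 * Nd"
  shows "\<delta> = fps_X ^ 2 * fps_deriv (Om r g0) * (Nd oo Om r g0)"
proof -
  define \<Omega> where "\<Omega> = Om r g0"
  define W where "W = r oo g0"
  define F where "F = 1 - fps_X * W"
  define a where "a = fps_deriv A0 oo \<Omega>"
  define q where "q = fps_deriv r oo g0"
  define N where "N = Nd oo \<Omega>"
  have F0: "F $ 0 = 1" by (simp add: F_def)
  have Om_F: "\<Omega> = fps_X * inverse F" by (simp add: \<Omega>_def Om_def F_def W_def)
  have h1: "\<Omega> * F = fps_X"
    using inverse_mult_eq_1[of F] F0 by (simp add: Om_F mult.assoc)
  have O0: "\<Omega> $ 0 = 0" by (simp add: \<Omega>_def)
  have "g0 $ 0 = (A0 oo Om r g0) $ 0" using g0 by (rule arg_cong)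
  then have g00: "g0 $ 0 = 0" using A00 by simp
  have "fps_deriv g0 = fps_deriv (A0 oo Om r g0)" using g0 by (rule arg_cong)
  then have dg: "fps_deriv g0 = a * fps_deriv \<Omega>"
    using fps_compose_deriv[OF O0, of A0] by (simp add: a_def \<Omega>_def)
  have dW: "fps_deriv W = q * fps_deriv g0"
    by (simp add: W_def q_def fps_compose_deriv[OF g00])
  have dF: "fps_deriv F = - (W + fps_X * fps_deriv W)"
    by (simp add: F_def algebra_simps)
  have "fps_deriv (\<Omega> * F) = 1" using h1 by simp
  then have h2: "fps_deriv \<Omega> * F + \<Omega> * fps_deriv F = 1"
    by (simp add: algebra_simps)
  have h4: "fps_X * W = 1 - F" by (simp add: F_def)
  define D where "D = fps_deriv \<Omega>"
  have s1: "D * F - \<Omega> * W - \<Omega> * (fps_X * (q * (a * D))) = 1"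
    using h2 by (simp add: dF dW dg D_def algebra_simps)
  have "fps_X * \<Omega> * (D * F - \<Omega> * W - \<Omega> * (fps_X * (q * (a * D)))) = fps_X * \<Omega> * 1"
    using s1 by simp
  then have s2: "fps_X * \<Omega> * (D * F) - fps_X * \<Omega> * (\<Omega> * W) - fps_X * \<Omega> * (\<Omega> * (fps_X * (q * (a * D)))) = fps_X * \<Omega>"
    by (simp only: right_diff_distrib mult_1_right)
  have s3: "fps_X * \<Omega> * (D * F) = fps_X ^ 2 * D"
  proof -
    have "fps_X * \<Omega> * (D * F) = fps_X * D * (\<Omega> * F)" by (simp add: ac_simps)
    then show ?thesis using h1 by (simp add: power2_eq_square ac_simps)
  qed
  have s4: "fps_X * \<Omega> * (\<Omega> * W) = \<Omega> ^ 2 - \<Omega> * fps_X"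
  proof -
    have "fps_X * \<Omega> * (\<Omega> * W) = \<Omega> * \<Omega> * (fps_X * W)" by (simp add: ac_simps)
    also have "\<dots> = \<Omega> * \<Omega> - \<Omega> * (\<Omega> * F)" by (simp add: h4 algebra_simps)
    also have "\<dots> = \<Omega> ^ 2 - \<Omega> * fps_X" by (simp add: h1 power2_eq_square)
    finally show ?thesis .
  qed
  have s5: "fps_X * \<Omega> * (\<Omega> * (fps_X * (q * (a * D)))) = fps_X ^ 2 * D * (a * \<Omega> ^ 2 * q)"
    by (simp add: power2_eq_square ac_simps)
  have s6: "fps_X ^ 2 * D - (\<Omega> ^ 2 - \<Omega> * fps_X) - fps_X ^ 2 * D * (a * \<Omega> ^ 2 * q) = fps_X * \<Omega>"
    using s2 unfolding s3 s4 s5 .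
  have "fps_X ^ 2 * D * (1 - a * \<Omega> ^ 2 * q) - \<Omega> ^ 2
      = (fps_X ^ 2 * D - (\<Omega> ^ 2 - \<Omega> * fps_X) - fps_X ^ 2 * D * (a * \<Omega> ^ 2 * q)) - fps_X * \<Omega>"
    by (simp add: algebra_simps)
  also have "\<dots> = 0" using s6 by simp
  finally have key: "fps_X ^ 2 * D * (1 - a * \<Omega> ^ 2 * q) = \<Omega> ^ 2" by simp
  have A1c: "A1 oo \<Omega> = \<Omega> ^ 2 * N"
    by (simp add: A1 N_def fps_compose_mult_distrib[OF O0] fps_X_power_compose[OF O0])
  have dl': "\<delta> = \<Omega> ^ 2 * N + a * (\<Omega> ^ 2 * (q * \<delta>))"
    using dl A1c by (simp add: \<Omega>_def[symmetric] a_def q_def)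
  have e1: "\<delta> - a * (\<Omega> ^ 2 * (q * \<delta>)) = \<Omega> ^ 2 * N"
    using arg_cong[OF dl', of "\<lambda>z. z - a * (\<Omega> ^ 2 * (q * \<delta>))"] by simp
  have "\<delta> * \<Omega> ^ 2 = \<delta> * (fps_X ^ 2 * D * (1 - a * \<Omega> ^ 2 * q))" using key by simp
  also have "\<dots> = fps_X ^ 2 * D * (\<delta> - a * (\<Omega> ^ 2 * (q * \<delta>)))" by (simp add: algebra_simps)
  also have "\<dots> = (fps_X ^ 2 * D * N) * \<Omega> ^ 2" using e1 by (simp add: ac_simps)
  finally have "\<delta> * \<Omega> ^ 2 = (fps_X ^ 2 * D * N) * \<Omega> ^ 2" .
  moreover have "\<Omega> ^ 2 \<noteq> 0"
  proof -
    have "\<Omega> $ 1 = 1" using F0 by (simp add: Om_F)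
    then have "\<Omega> \<noteq> 0" by auto
    then show ?thesis by simp
  qed
  ultimately have "\<delta> = fps_X ^ 2 * D * N" by simp
  then show ?thesis by (simp add: \<Omega>_def N_def D_def)
qed

lemma lift_nth[simp]: "lift_fps f $ n = [:f $ n:]"
  by (simp add: lift_fps_def)

lemma const_poly_sum: "[:sum f A:] = (\<Sum>i\<in>A. [:f i:])"
proof (induction A rule: infinite_finite_induct)
  case (insert x F)
  then show ?case by (simp add: insert.IH[symmetric])
qed simp_all

lemma lift_add: "lift_fps (a + b) = lift_fps a + lift_fps b"
  by (rule fps_ext) simp

lemma lift_diff: "lift_fps (a - b) = lift_fps a - lift_fps b"
  by (rule fps_ext) simp

lemma lift_one: "lift_fps 1 = 1"
  by (rule fps_ext) (simp add: one_pCons)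

lemma lift_X: "lift_fps fps_X = fps_X"
  by (rule fps_ext) (simp add: one_pCons)

lemma lift_mult: "lift_fps (a * b) = lift_fps a * lift_fps b"
  by (rule fps_ext) (simp add: fps_mult_nth const_poly_sum mult.commute)

lemma lift_power: "lift_fps (a ^ k) = lift_fps a ^ k"
  by (induction k) (simp_all add: lift_one lift_mult)

definition Tgeo :: "complex poly fps" where
  "Tgeo = Abs_fps (\<lambda>k. [:0, 1:] ^ k)"

lemma Tgeo_inv: "(1 - fps_const [:0, 1:] * fps_X) * Tgeo = 1"
proof (rule fps_ext)
  fix n
  show "((1 - fps_const [:0, 1:] * fps_X) * Tgeo) $ n = (1 :: complex poly fps) $ n"
    by (cases n) (simp_all add: Tgeo_def algebra_simps)
qed

lemma kernel_the:
  fixes gg Rs \<Psi> :: "complex fps"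
  assumes gg0: "gg $ 0 = 0" and Psi: "\<Psi> = gg * inverse (1 + gg * (Rs oo gg))"
  shows "(THE c. fps_X * c * (1 + lift_fps (gg * (Rs oo gg)) - fps_const [:0, 1:] * lift_fps gg) = lift_fps gg)
      = fps_shift (Suc 0) ((fps_X * Tgeo) oo lift_fps \<Psi>)"
proof -
  define A where "A = 1 + gg * (Rs oo gg)"
  define x where "x = (fps_const [:0, 1:] :: complex poly fps)"
  define den where "den = 1 + lift_fps (gg * (Rs oo gg)) - x * lift_fps gg"
  define l where "l = lift_fps \<Psi>"
  define c where "c = fps_shift (Suc 0) ((fps_X * Tgeo) oo l)"
  have A0: "A $ 0 = 1" by (simp add: A_def gg0)
  have PsiA: "\<Psi> * A = gg"
    using inverse_mult_eq_1[of A] A0 by (simp add: Psi A_def[symmetric] mult.assoc)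
  have l0: "l $ 0 = 0" using A0 gg0 by (simp add: l_def Psi A_def[symmetric])
  have den_eq: "den = lift_fps A * (1 - x * l)"
  proof -
    have "lift_fps gg = l * lift_fps A" using PsiA by (simp add: l_def lift_mult[symmetric])
    then show ?thesis by (simp add: den_def A_def lift_add lift_one algebra_simps)
  qed
  have den0: "den $ 0 = 1" by (simp add: den_def gg0 x_def)
  have T1: "(1 - x * l) * (Tgeo oo l) = 1"
  proof -
    have "((1 - x * fps_X) * Tgeo) oo l = 1" using Tgeo_inv by (simp add: x_def)
    then show ?thesis
      using l0 by (simp add: fps_compose_mult_distrib fps_compose_sub_distrib x_def
          fps_const_mult_apply_left[symmetric])
  qed
  have V0: "((fps_X * Tgeo) oo l) $ 0 = 0" by simp
  have Xc: "fps_X * c = (fps_X * Tgeo) oo l"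
    unfolding c_def by (rule X_shift1[OF V0])
  also have "\<dots> = l * (Tgeo oo l)"
    using l0 by (simp add: fps_compose_mult_distrib)
  finally have Xc': "fps_X * c = l * (Tgeo oo l)" .
  have sat: "fps_X * c * den = lift_fps gg"
  proof -
    have "fps_X * c * den = l * lift_fps A * ((1 - x * l) * (Tgeo oo l))"
      by (simp add: Xc' den_eq algebra_simps)
    also have "\<dots> = lift_fps (\<Psi> * A)" using T1 unfolding l_def by (simp add: lift_mult)
    finally show ?thesis by (simp add: PsiA)
  qed
  have den_nz: "fps_X * den \<noteq> 0"
  proof -
    have "den \<noteq> 0" using den0 by auto
    then show ?thesis by simp
  qed
  have "(THE c. fps_X * c * den = lift_fps gg) = c"
  proof (rule the_equality)
    show "fps_X * c * den = lift_fps gg" by (rule sat)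
  next
    fix c' assume "fps_X * c' * den = lift_fps gg"
    then have "c' * (fps_X * den) = c * (fps_X * den)" using sat by (simp add: algebra_simps)
    then show "c' = c" using den_nz by simp
  qed
  then show ?thesis by (simp add: den_def x_def c_def l_def)
qed

lemma pair_bound: "degree q \<le> N \<Longrightarrow> pair m q = (\<Sum>n\<le>N. coeff q n * m n)"
  unfolding pair_def by (rule sum.mono_neutral_left) (auto simp: coeff_eq_0)

lemma pair_add: "pair m (p + q) = pair m p + pair m q"
proof -
  define N where "N = max (degree p) (degree q)"
  have "degree (p + q) \<le> N" "degree p \<le> N" "degree q \<le> N"
    by (auto simp: N_def intro: degree_add_le)
  then show ?thesis by (simp add: pair_bound sum.distrib algebra_simps)
qed

lemma pair_smult: "pair m (smult a q) = a * pair m q"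
proof -
  have "degree (smult a q) \<le> degree q" by (rule degree_smult_le)
  then show ?thesis by (simp add: pair_bound[of _ "degree q"] sum_distrib_left mult.assoc)
qed

lemma pair_0[simp]: "pair m 0 = 0"
  by (simp add: pair_def)

lemma pair_sum: "pair m (\<Sum>i\<in>I. f i) = (\<Sum>i\<in>I. pair m (f i))"
  by (induction I rule: infinite_finite_induct) (simp_all add: pair_add)

lemma pair_monom: "pair m (monom b k) = b * m k"
proof -
  have "pair m (monom b k) = (\<Sum>n\<le>k. coeff (monom b k) n * m n)"
    by (rule pair_bound[OF degree_monom_le])
  also have "\<dots> = (\<Sum>n\<le>k. (if n = k then b * m k else 0))"
    by (intro sum.cong refl) auto
  also have "\<dots> = b * m k" by simp
  finally show ?thesis .
qed

lemma Tgeo_X_nth: "(fps_X * Tgeo) $ i = (if i = 0 then 0 else [:0, 1:] ^ (i - 1))"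
  by (simp add: Tgeo_def)

lemma kernel_coeff_pair:
  fixes \<Psi> :: "complex fps" and \<nu> :: functional
  assumes P0: "\<Psi> $ 0 = 0"
  defines "c \<equiv> fps_shift (Suc 0) ((fps_X * Tgeo) oo lift_fps \<Psi>)"
  shows "pair (\<lambda>m. \<nu> (Suc m) / of_nat (Suc m)) (c $ j)
       = (Abs_fps (\<lambda>i. if i = 0 then 0 else \<nu> i / of_nat i) oo \<Psi>) $ Suc j"
proof -
  define \<nu>I where "\<nu>I = (\<lambda>m. \<nu> (Suc m) / of_nat (Suc m))"
  have trm: "(fps_X * Tgeo) $ i * (lift_fps \<Psi> ^ i) $ Suc j
      = (if i = 0 then 0 else monom ((\<Psi> ^ i) $ Suc j) (i - 1))" for i
    by (simp add: Tgeo_def lift_power[symmetric] monom_altdef)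
  have "c $ j = (\<Sum>i=0..Suc j. (fps_X * Tgeo) $ i * (lift_fps \<Psi> ^ i) $ Suc j)"
    by (simp only: c_def fps_shift_nth add_Suc_right add_0_right fps_compose_nth)
  also have "\<dots> = (\<Sum>i=0..Suc j. (if i = 0 then 0 else monom ((\<Psi> ^ i) $ Suc j) (i - 1)))"
    by (rule sum.cong[OF refl], rule trm)
  finally have cj: "c $ j = (\<Sum>i=0..Suc j. (if i = 0 then 0 else monom ((\<Psi> ^ i) $ Suc j) (i - 1)))" .
  have "pair \<nu>I (c $ j) = (\<Sum>i=0..Suc j. pair \<nu>I (if i = 0 then 0 else monom ((\<Psi> ^ i) $ Suc j) (i - 1)))"
    by (simp only: cj pair_sum)
  also have "\<dots> = (\<Sum>i=0..Suc j. (if i = 0 then 0 else \<nu> i / of_nat i) * (\<Psi> ^ i) $ Suc j)"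
    by (intro sum.cong refl) (auto simp: pair_monom \<nu>I_def)
  also have "\<dots> = (Abs_fps (\<lambda>i. if i = 0 then 0 else \<nu> i / of_nat i) oo \<Psi>) $ Suc j"
    unfolding fps_compose_nth by (intro sum.cong refl) simp
  finally show ?thesis by (simp add: \<nu>I_def)
qed

lemma vd_limit:
  fixes f :: "real \<Rightarrow> complex"
  assumes "(f has_vector_derivative D) (at 0)"
  shows "((\<lambda>e. (f e - f 0) / complex_of_real e) \<longlongrightarrow> D) (at 0)"
proof -
  have "(f has_derivative (\<lambda>x. x *\<^sub>R D)) (at 0)" using assms by (simp add: has_vector_derivative_def)
  then have lim: "((\<lambda>h. norm (f (0 + h) - f 0 - h *\<^sub>R D) / norm h) \<longlongrightarrow> 0) (at 0)"
    by (simp add: has_derivative_at)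
  have ev: "eventually (\<lambda>h. norm (f (0 + h) - f 0 - h *\<^sub>R D) / norm h = norm ((f h - f 0) / complex_of_real h - D)) (at (0::real))"
    unfolding eventually_at_filter
  proof (intro always_eventually allI impI)
    fix h :: real assume h: "h \<noteq> 0"
    have "(f h - f 0) / complex_of_real h - D = (f h - f 0 - h *\<^sub>R D) / complex_of_real h"
      using h by (simp add: scaleR_conv_of_real field_simps)
    then show "norm (f (0 + h) - f 0 - h *\<^sub>R D) / norm h = norm ((f h - f 0) / complex_of_real h - D)"
      by (simp add: norm_divide)
  qed
  have "((\<lambda>h. norm ((f h - f 0) / complex_of_real h - D)) \<longlongrightarrow> 0) (at 0)"
    by (rule Lim_transform_eventually[OF lim ev])
  then have "((\<lambda>h. (f h - f 0) / complex_of_real h - D) \<longlongrightarrow> 0) (at 0)"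
    by (rule tendsto_norm_zero_cancel)
  then show ?thesis by (simp add: Lim_null[symmetric])
qed

theorem proposition4p5:
  fixes \<mu> \<nu> :: functional and p g :: "real \<Rightarrow> complex poly" and s t :: real
  assumes "freely_inf_div \<mu>"
    and "martingale_poly \<mu> p"
    and "\<forall>r\<ge>0. pderiv (g r) = p r"
    and "centered \<nu>"
    and "0 \<le> s" and "0 \<le> t"
  shows "\<exists>D. has_gateaux_deriv \<mu> t (free_semigroup \<mu> s) \<nu> D \<and>
             pair D (g (t + s)) = pair \<nu> (g s)"
proof -
  define \<tau> where "\<tau> = free_semigroup \<mu> s"
  define \<mu>t where "\<mu>t = free_semigroup \<mu> t"
  define \<tau>e where "\<tau>e = (\<lambda>(e::real) k. \<tau> k + complex_of_real e * \<nu> k)"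
  define \<rho> where "\<rho> = (\<lambda>e. Cmap \<mu> t (\<tau>e e))"
  define gf where "gf = (\<lambda>e. G_fps (\<rho> e))"
  have u\<tau>: "unital \<tau>" using free_semigroup_prop by (simp add: \<tau>_def)
  have u\<mu>t: "unital \<mu>t" using free_semigroup_prop by (simp add: \<mu>t_def)
  have \<nu>0: "\<nu> 0 = 0" using assms(4) by (simp add: centered_def)
  have u\<tau>e: "unital (\<tau>e e)" for e using u\<tau> \<nu>0 by (simp add: unital_def \<tau>e_def)
  have \<tau>e0: "\<tau>e 0 = \<tau>" by (simp add: \<tau>e_def)
  have u\<rho>: "unital (\<rho> e)" for e using free_conv_prop by (simp add: \<rho>_def Cmap_def)
  have R\<rho>: "R_fps (\<rho> e) = R_fps \<mu>t + R_fps (\<tau>e e)" for e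
    using free_conv_prop by (simp add: \<rho>_def Cmap_def \<mu>t_def)
  have Cm: "Cmap \<mu> t (\<lambda>k. \<tau> k + complex_of_real e * \<nu> k) = \<rho> e" for e
    by (simp add: \<rho>_def \<tau>e_def)
  have Cm0: "Cmap \<mu> t \<tau> = \<rho> 0" by (simp add: \<rho>_def \<tau>e0)
  show ?thesis
  proof (cases "t = 0")
    case True
    have R0: "R_fps \<mu>t = 0" using free_semigroup_prop[of \<mu> t] True by (simp add: \<mu>t_def)
    have \<rho>\<tau>: "\<rho> e = \<tau>e e" for e using R_inj[OF u\<rho> u\<tau>e] R\<rho> R0 by simp
    have "has_gateaux_deriv \<mu> t \<tau> \<nu> \<nu>"
      unfolding has_gateaux_deriv_def
    proof
      fix n
      have ev: "eventually (\<lambda>\<epsilon>. \<nu> n = (Cmap \<mu> t (\<lambda>k. \<tau> k + complex_of_real \<epsilon> * \<nu> k) n - Cmap \<mu> t \<tau> n) / complex_of_real \<epsilon>) (at (0::real))"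
        unfolding eventually_at_filter
      proof (intro always_eventually allI impI)
        fix \<epsilon> :: real assume "\<epsilon> \<noteq> 0"
        then show "\<nu> n = (Cmap \<mu> t (\<lambda>k. \<tau> k + complex_of_real \<epsilon> * \<nu> k) n - Cmap \<mu> t \<tau> n) / complex_of_real \<epsilon>"
          by (simp add: Cm Cm0 \<rho>\<tau> \<tau>e_def)
      qed
      show "((\<lambda>\<epsilon>. (Cmap \<mu> t (\<lambda>k. \<tau> k + complex_of_real \<epsilon> * \<nu> k) n - Cmap \<mu> t \<tau> n) / complex_of_real \<epsilon>) \<longlongrightarrow> \<nu> n) (at 0)"
        by (rule Lim_transform_eventually[OF tendsto_const ev])
    qed
    then show ?thesis using True by (auto simp: \<tau>_def)
  next
    case False
    then have tpos: "0 < t" using assms(6) by simp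
    have Phi_eq: "gf e = Phi (G_fps \<tau>) (G_fps \<nu>) (R_fps \<mu>t) e (gf e)" for e
    proof -
      note S = subord[OF u\<mu>t u\<tau>e u\<rho> R\<rho>[of e]]
      have GT: "G_fps (\<tau>e e) = G_fps \<tau> + fps_const (complex_of_real e) * G_fps \<nu>"
        by (rule fps_ext) (simp add: G_fps_nth \<tau>e_def)
      have "G_fps (\<rho> e) = G_fps (\<tau>e e) oo (fps_X * inverse (1 - fps_X * (R_fps \<mu>t oo G_fps (\<rho> e))))"
        using S(1) unfolding S(2) .
      then show ?thesis unfolding gf_def Phi_def Om_def GT .
    qed
    have g00: "gf e $ 0 = 0" for e by (simp add: gf_def)
    obtain \<delta> where d\<delta>: "hasd gf \<delta>" using fixpoint_hasd[OF Phi_eq g00] by blast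
    define r where "r = R_fps \<mu>t"
    define \<Psi> where "\<Psi> = Om r (gf 0)"
    define Nd where "Nd = Abs_fps (\<lambda>k. \<nu> (Suc k))"
    define Nlog where "Nlog = Abs_fps (\<lambda>i. if i = 0 then 0 else \<nu> i / of_nat i)"
    have dleq: "\<delta> = (G_fps \<nu> oo Om r (gf 0)) + (fps_deriv (G_fps \<tau>) oo Om r (gf 0)) * (Om r (gf 0) ^ 2 * ((fps_deriv r oo gf 0) * \<delta>))"
      using delta_eq[OF Phi_eq g00 d\<delta>] by (simp add: r_def)
    have g0eq: "gf 0 = G_fps \<tau> oo Om r (gf 0)" using Phi_eq[of 0] by (simp add: Phi_def r_def)
    have G\<nu>: "G_fps \<nu> = fps_X ^ 2 * Nd"
    proof (rule fps_ext)
      fix n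
      show "G_fps \<nu> $ n = (fps_X ^ 2 * Nd) $ n"
      proof (cases n)
        case 0 then show ?thesis by (simp add: fps_X_power_mult_nth)
      next
        case (Suc m)
        then show ?thesis
          by (cases m) (simp_all add: fps_X_power_mult_nth G_fps_nth Nd_def \<nu>0)
      qed
    qed
    have G\<tau>0: "G_fps \<tau> $ 0 = 0" by simp
    have \<delta>eq: "\<delta> = fps_X ^ 2 * fps_deriv \<Psi> * (Nd oo \<Psi>)"
      unfolding \<Psi>_def by (rule final_alg[OF g0eq G\<tau>0 dleq G\<nu>])
    have \<Psi>0: "\<Psi> $ 0 = 0" by (simp add: \<Psi>_def)
    have dNlog: "fps_deriv Nlog = Nd" by (rule fps_ext) (simp add: Nlog_def Nd_def del: of_nat_Suc)
    have \<delta>eq2: "\<delta> = fps_X ^ 2 * fps_deriv (Nlog oo \<Psi>)"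
      using \<delta>eq fps_compose_deriv[OF \<Psi>0, of Nlog] dNlog by (simp add: ac_simps)
    have \<delta>SS: "\<delta> $ Suc (Suc j) = of_nat (Suc j) * (Nlog oo \<Psi>) $ Suc j" for j
      by (simp add: \<delta>eq2 fps_X_power_mult_nth)
    have \<delta>1: "\<delta> $ Suc 0 = 0" by (simp add: \<delta>eq2 fps_X_power_mult_nth)
    have \<rho>0: "free_semigroup \<mu> (t + s) = \<rho> 0"
    proof (rule free_semigroup_eqI[OF u\<rho>])
      have "R_fps (\<rho> 0) = R_fps \<mu>t + R_fps \<tau>" using R\<rho>[of 0] by (simp add: \<tau>e0)
      also have "\<dots> = fps_const (complex_of_real t) * R_fps \<mu> + fps_const (complex_of_real s) * R_fps \<mu>"
        using free_semigroup_prop[of \<mu> t] free_semigroup_prop[of \<mu> s] by (simp add: \<mu>t_def \<tau>_def)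
      also have "\<dots> = fps_const (complex_of_real (t + s)) * R_fps \<mu>"
        by (simp only: of_real_add fps_const_add[symmetric] distrib_right)
      finally show "R_fps (\<rho> 0) = fps_const (complex_of_real (t + s)) * R_fps \<mu>" .
    qed
    have \<Psi>alt: "\<Psi> = gf 0 * inverse (1 + gf 0 * (R_fps \<tau> oo gf 0))"
    proof -
      have "G_fps (\<rho> 0) * inverse (1 + G_fps (\<rho> 0) * (R_fps \<tau> oo G_fps (\<rho> 0)))
          = fps_X * inverse (1 - fps_X * (R_fps \<mu>t oo G_fps (\<rho> 0)))"
        using subord(2)[OF u\<mu>t u\<tau>e u\<rho> R\<rho>[of 0]] unfolding \<tau>e0 .
      then show ?thesis by (simp add: \<Psi>_def Om_def r_def gf_def)
    qed
    define c where "c = kernel_coeffs \<mu> s (t + s)"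
    have kc: "c = fps_shift (Suc 0) ((fps_X * Tgeo) oo lift_fps \<Psi>)"
    proof -
      have "c = (THE c. fps_X * c * (1 + lift_fps (gf 0 * (R_fps \<tau> oo gf 0)) - fps_const [:0, 1:] * lift_fps (gf 0)) = lift_fps (gf 0))"
        by (simp add: c_def kernel_coeffs_def Let_def \<rho>0 gf_def \<tau>_def)
      also have "\<dots> = fps_shift (Suc 0) ((fps_X * Tgeo) oo lift_fps \<Psi>)"
        by (rule kernel_the[OF g00 \<Psi>alt])
      finally show ?thesis .
    qed
    define \<nu>I where "\<nu>I = (\<lambda>m. \<nu> (Suc m) / of_nat (Suc m))"
    have Lc: "pair \<nu>I (c $ j) = (Nlog oo \<Psi>) $ Suc j" for j
      using kernel_coeff_pair[OF \<Psi>0, of \<nu> j] by (simp add: kc \<nu>I_def Nlog_def)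
    have \<delta>c: "\<delta> $ Suc (Suc j) = of_nat (Suc j) * pair \<nu>I (c $ j)" for j
      using \<delta>SS Lc by simp
    define D where "D = (\<lambda>n. \<delta> $ Suc n)"
    have gat: "has_gateaux_deriv \<mu> t \<tau> \<nu> D"
      unfolding has_gateaux_deriv_def
    proof
      fix n
      have "((\<lambda>e. gf e $ Suc n) has_vector_derivative \<delta> $ Suc n) (at 0)"
        using d\<delta> by (simp add: hasd_def)
      then have "((\<lambda>e. (gf e $ Suc n - gf 0 $ Suc n) / complex_of_real e) \<longlongrightarrow> \<delta> $ Suc n) (at 0)"
        by (rule vd_limit)
      then show "((\<lambda>\<epsilon>. (Cmap \<mu> t (\<lambda>k. \<tau> k + complex_of_real \<epsilon> * \<nu> k) n - Cmap \<mu> t \<tau> n) / complex_of_real \<epsilon>) \<longlongrightarrow> D n) (at 0)"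
        by (simp add: Cm Cm0 gf_def D_def G_fps_nth)
    qed
    define P where "P = g (t + s)"
    define Q where "Q = g s"
    have pP: "pderiv P = p (t + s)" using assms(3) tpos assms(5) by (simp add: P_def)
    have pQ: "pderiv Q = p s" using assms(3) assms(5) by (simp add: Q_def)
    have mart: "Kop \<mu> s (t + s) (p (t + s)) = p s"
      using assms(2) tpos assms(5) unfolding martingale_poly_def by simp
    define N where "N = degree P"
    have "degree (p (t + s)) = degree P - 1" using degree_pderiv[of P] pP by simp
    then have degp: "degree (p (t + s)) \<le> N" by (simp add: N_def)
    have "pair D P = (\<Sum>n\<le>Suc N. coeff P n * D n)"
      by (rule pair_bound) (simp add: N_def)
    also have "\<dots> = coeff P 0 * D 0 + (\<Sum>j\<le>N. coeff P (Suc j) * D (Suc j))"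
      by (rule sum.atMost_Suc_shift)
    also have "\<dots> = (\<Sum>j\<le>N. coeff (pderiv P) j * pair \<nu>I (c $ j))"
      by (simp add: D_def \<delta>1 \<delta>c coeff_pderiv algebra_simps)
    also have "\<dots> = (\<Sum>j\<le>N. coeff (p (t + s)) j * pair \<nu>I (c $ j))"
      by (simp only: pP)
    also have "\<dots> = pair \<nu>I (Kop \<mu> s (t + s) (p (t + s)))"
    proof -
      have "pair \<nu>I (Kop \<mu> s (t + s) (p (t + s))) = (\<Sum>j\<le>degree (p (t + s)). coeff (p (t + s)) j * pair \<nu>I (c $ j))"
        by (simp add: Kop_def pair_sum pair_smult c_def)
      also have "\<dots> = (\<Sum>j\<le>N. coeff (p (t + s)) j * pair \<nu>I (c $ j))"
        by (rule sum.mono_neutral_left) (use degp in \<open>auto simp: coeff_eq_0\<close>)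
      finally show ?thesis by simp
    qed
    also have "\<dots> = pair \<nu>I (pderiv Q)" using mart pQ by simp
    also have "\<dots> = pair \<nu> Q"
    proof -
      define M where "M = degree Q"
      have "pair \<nu> Q = (\<Sum>n\<le>Suc M. coeff Q n * \<nu> n)"
        by (rule pair_bound) (simp add: M_def)
      also have "\<dots> = (\<Sum>j\<le>M. coeff Q (Suc j) * \<nu> (Suc j))"
        by (subst sum.atMost_Suc_shift) (simp add: \<nu>0)
      also have "\<dots> = (\<Sum>j\<le>M. coeff (pderiv Q) j * \<nu>I j)"
        by (intro sum.cong refl) (simp add: coeff_pderiv \<nu>I_def del: of_nat_Suc)
      also have "\<dots> = pair \<nu>I (pderiv Q)"
        by (rule pair_bound[symmetric]) (simp add: M_def degree_pderiv)
      finally show ?thesis by simp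
    qed
    finally have "pair D P = pair \<nu> Q" .
    then show ?thesis using gat by (auto simp: \<tau>_def P_def Q_def)
  qed
qed

end
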